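(* Let $(G,d_G)$ be a countable group with a proper left invariant metric and let $f:\mathbb N\to\mathbb N$ be a function. If every finitely generated subgroup $H$ of $G$ (with the restricted metric) is of growth type at most $f$, then $G$ is of growth type at most $f$.
   Context: A proper left invariant metric on $G$ is $d(g,h)=\|g^{-1}h\|$ for a proper norm ($\|g\|=0$ iff $g=1$, $\|g\|=\|g^{-1}\|$, subadditive, finite balls). For $s>0$, an $s$-scale chain of length $m$ from $x$ to $y$ in a metric space is a sequence $x=x_0,\dots,x_m=y$ with $d(x_i,x_{i+1})<s$. For $g$ in a metric space $X$, $s>0$, $n\in\mathbb N$, let $A_g^{(n,s)}$ be the set of points $h\in X$ joined to $g$ by an $s$-scale chain of length $n$ in $X$, and $gr_{(s,g)}(n)=\#A_g^{(n,s)}$. For functions $u,v$, $u\preceq v$ means there is $C>0$ with $u(x)\le C\,v(Cx)$ for all sufficiently large $x$. $X$ is of growth type at most $f$ if $gr_{(s,g)}\preceq f$ for all $g\in X$, $s>0$. *)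

theory Defs
  imports Complex_Main "HOL-Algebra.Generated_Groups" "HOL-Library.Countable_Set"
begin

text \<open>Proper norm on a group G (HOL-Algebra), inducing the left-invariant metric
  d(g,h) = N(g^-1 h).\<close>
definition proper_norm :: "('a, 'b) monoid_scheme \<Rightarrow> ('a \<Rightarrow> real) \<Rightarrow> bool" where
  "proper_norm G N \<longleftrightarrow>
     (\<forall>g\<in>carrier G. N g = 0 \<longleftrightarrow> g = \<one>\<^bsub>G\<^esub>) \<and>
     (\<forall>g\<in>carrier G. N (inv\<^bsub>G\<^esub> g) = N g) \<and>
     (\<forall>g\<in>carrier G. \<forall>h\<in>carrier G. N (g \<otimes>\<^bsub>G\<^esub> h) \<le> N g + N h) \<and>
     (\<forall>r::real. finite {g \<in> carrier G. N g \<le> r})"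

definition norm_metric :: "('a, 'b) monoid_scheme \<Rightarrow> ('a \<Rightarrow> real) \<Rightarrow> 'a \<Rightarrow> 'a \<Rightarrow> real" where
  "norm_metric G N g h = N (inv\<^bsub>G\<^esub> g \<otimes>\<^bsub>G\<^esub> h)"

definition scale_chain :: "('a \<Rightarrow> 'a \<Rightarrow> real) \<Rightarrow> 'a set \<Rightarrow> real \<Rightarrow> nat \<Rightarrow> 'a \<Rightarrow> 'a \<Rightarrow> bool" where
  "scale_chain d X s m x y \<longleftrightarrow>
     (\<exists>p :: nat \<Rightarrow> 'a. p 0 = x \<and> p m = y \<and> (\<forall>i\<le>m. p i \<in> X) \<and>
        (\<forall>i<m. d (p i) (p (Suc i)) < s))"

definition chain_ball :: "('a \<Rightarrow> 'a \<Rightarrow> real) \<Rightarrow> 'a set \<Rightarrow> real \<Rightarrow> 'a \<Rightarrow> nat \<Rightarrow> 'a set" where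
  "chain_ball d X s g n = {h \<in> X. scale_chain d X s n g h}"

definition gr :: "('a \<Rightarrow> 'a \<Rightarrow> real) \<Rightarrow> 'a set \<Rightarrow> real \<Rightarrow> 'a \<Rightarrow> nat \<Rightarrow> nat" where
  "gr d X s g n = card (chain_ball d X s g n)"

definition dominated :: "(nat \<Rightarrow> nat) \<Rightarrow> (nat \<Rightarrow> nat) \<Rightarrow> bool" where
  "dominated u v \<longleftrightarrow> (\<exists>C::nat. C > 0 \<and> (\<exists>x0. \<forall>x\<ge>x0. u x \<le> C * v (C * x)))"

definition growth_type_at_most :: "('a \<Rightarrow> 'a \<Rightarrow> real) \<Rightarrow> 'a set \<Rightarrow> (nat \<Rightarrow> nat) \<Rightarrow> bool" where
  "growth_type_at_most d X f \<longleftrightarrow> (\<forall>g\<in>X. \<forall>s>0. dominated (gr d X s g) f)"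

end

theory Submission
  imports Defs
begin

theorem mainTheorem6:
  fixes G :: "('a, 'b) monoid_scheme" and N :: "'a \<Rightarrow> real" and f :: "nat \<Rightarrow> nat"
  assumes "group G"
    and "countable (carrier G)"
    and "proper_norm G N"
    and "\<And>H S. finite S \<Longrightarrow> S \<subseteq> carrier G \<Longrightarrow> H = generate G S \<Longrightarrow>
            growth_type_at_most (norm_metric G N) H f"
  shows "growth_type_at_most (norm_metric G N) (carrier G) f"
  unfolding growth_type_at_most_def
proof (intro ballI allI impI)
  fix g s assume g: "g \<in> carrier G" and s: "(s::real) > 0"
  interpret group G by (rule assms(1))
  define S0 where "S0 = {x \<in> carrier G. N x < s}"
  define S where "S = insert g S0"
  define H where "H = generate G S"
  have fin0: "finite S0"
  proof -
    have "finite {x \<in> carrier G. N x \<le> s}" using assms(3) unfolding proper_norm_def by blast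
    moreover have "S0 \<subseteq> {x \<in> carrier G. N x \<le> s}" unfolding S0_def by auto
    ultimately show ?thesis by (rule finite_subset[rotated])
  qed
  have finS: "finite S" using fin0 S_def by simp
  have SG: "S \<subseteq> carrier G" using g S_def S0_def by auto
  have HG: "H \<subseteq> carrier G" using generate_incl[OF SG] H_def by simp
  have gH: "g \<in> H" unfolding H_def S_def by (rule generate.incl) simp
  have gtH: "growth_type_at_most (norm_metric G N) H f"
    using assms(4)[OF finS SG H_def] .
  have eq: "chain_ball (norm_metric G N) (carrier G) s g n = chain_ball (norm_metric G N) H s g n" for n
  proof
    show "chain_ball (norm_metric G N) (carrier G) s g n \<subseteq> chain_ball (norm_metric G N) H s g n"
    proof
      fix h assume "h \<in> chain_ball (norm_metric G N) (carrier G) s g n"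
      then obtain p where p0: "p 0 = g" and pn: "p n = h" and pc: "\<forall>i\<le>n. p i \<in> carrier G"
        and pd: "\<forall>i<n. norm_metric G N (p i) (p (Suc i)) < s"
        unfolding chain_ball_def scale_chain_def by blast
      have pH: "i \<le> n \<Longrightarrow> p i \<in> H" for i
      proof (induction i)
        case 0 then show ?case using p0 gH by simp
      next
        case (Suc i)
        have ci: "p i \<in> carrier G" "p (Suc i) \<in> carrier G" using pc Suc.prems by auto
        have "inv\<^bsub>G\<^esub> p i \<otimes>\<^bsub>G\<^esub> p (Suc i) \<in> S0"
          using pd Suc.prems ci unfolding S0_def norm_metric_def by auto
        then have "inv\<^bsub>G\<^esub> p i \<otimes>\<^bsub>G\<^esub> p (Suc i) \<in> H" unfolding H_def S_def
          by (intro generate.incl) simp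
        moreover have "p i \<in> H" using Suc by simp
        ultimately have "p i \<otimes>\<^bsub>G\<^esub> (inv\<^bsub>G\<^esub> p i \<otimes>\<^bsub>G\<^esub> p (Suc i)) \<in> H"
          unfolding H_def by (metis generate.eng)
        moreover have "p i \<otimes>\<^bsub>G\<^esub> (inv\<^bsub>G\<^esub> p i \<otimes>\<^bsub>G\<^esub> p (Suc i)) = p (Suc i)"
          using ci by (simp add: m_assoc[symmetric] r_inv)
        ultimately show ?case by simp
      qed
      show "h \<in> chain_ball (norm_metric G N) H s g n"
        unfolding chain_ball_def scale_chain_def
        using p0 pn pH pd by (auto intro!: exI[of _ p])
    qed
  next
    show "chain_ball (norm_metric G N) H s g n \<subseteq> chain_ball (norm_metric G N) (carrier G) s g n"
      unfolding chain_ball_def scale_chain_def using HG by blast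
  qed
  have "gr (norm_metric G N) (carrier G) s g = gr (norm_metric G N) H s g"
    unfolding gr_def using eq by auto
  then show "dominated (gr (norm_metric G N) (carrier G) s g) f"
    using gtH gH s unfolding growth_type_at_most_def by simp
qed

end
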